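(* Let $X$ be a real random variable with density $p$, $\mathbb{E}X=0$, $\mathrm{Var}(X)=1$, $\mathbb{E}|X|^s<\infty$ for some $s>2$, and $\|p-\phi\|_\infty\le1/2$. Then there exists $C_1>0$ such that for every $\varepsilon>0$, \[ D(X)\le C_1(\mathbb{E}|X|^s)^{2/s}\Big(\sqrt{|\ln\|p-\phi\|_\infty|}\,\|p-\phi\|_\infty\Big)^{1-2/s}\le C_1M(\varepsilon)(\mathbb{E}|X|^s)^{2/s}\|p-\phi\|_\infty^{(1-2/s)(1-\varepsilon)}, \] where $M(\varepsilon):=\max_{x\in[0,1]}x^\varepsilon\sqrt{|\ln x|}+1<\infty$.
   Context: $\phi(x)=(2\pi)^{-1/2}e^{-x^2/2}$. $D(X)$ denotes the Kullback–Leibler divergence of $X$ from a Gaussian with the same mean and variance as $X$; here $D(X)=\int p\ln(p/\phi)$. $\|\cdot\|_\infty$ is the sup norm on $\mathbb{R}$. *)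

theory Defs
  imports "HOL-Probability.Probability"
begin

definition sup_norm :: "(real \<Rightarrow> real) \<Rightarrow> real" where
  "sup_norm f = (SUP x. \<bar>f x\<bar>)"

definition D_gauss :: "(real \<Rightarrow> real) \<Rightarrow> real" where
  "D_gauss p = (LINT x|lborel. p x * ln (p x / std_normal_density x))"

definition M_eps :: "real \<Rightarrow> real" where
  "M_eps \<epsilon> = (SUP x\<in>{0..1}. x powr \<epsilon> * sqrt \<bar>ln x\<bar>) + 1"

end

theory Submission
  imports Defs
begin


lemma young_pt:
  fixes s x \<mu> :: real
  assumes s: "s > 2" and mu: "\<mu> > 0"
  shows "x\<^sup>2 \<le> (2/s) * (\<bar>x\<bar> powr s / \<mu>) + (1 - 2/s) * \<mu> powr (2/(s-2))"
proof (cases "x = 0")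
  case True
  then show ?thesis using s mu by (simp add: divide_simps)
next
  case False
  define a where "a = x\<^sup>2 * \<mu> powr (-2/s)"
  define b where "b = \<mu> powr (2/s)"
  have a0: "a \<ge> 0" "b \<ge> 0" unfolding a_def b_def by auto
  have ab: "a * b = x\<^sup>2" unfolding a_def b_def using mu
    by (simp add: powr_add[symmetric])
  have Y: "a * b \<le> a powr (s/2) / (s/2) + b powr (s/(s-2)) / (s/(s-2))"
    by (rule Youngs_inequality) (use s a0 in \<open>auto simp: divide_simps\<close>)
  have "a powr (s/2) = \<bar>x\<bar> powr s / \<mu>"
  proof -
    have "a powr (s/2) = (x\<^sup>2) powr (s/2) * (\<mu> powr (-2/s)) powr (s/2)"
      unfolding a_def by (simp add: powr_mult)
    also have "(x\<^sup>2) powr (s/2) = \<bar>x\<bar> powr s"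
    proof -
      have "x\<^sup>2 = \<bar>x\<bar> powr 2" using False by (simp add: powr_numeral)
      then have "(x\<^sup>2) powr (s/2) = (\<bar>x\<bar> powr 2) powr (s/2)" by simp
      also have "\<dots> = \<bar>x\<bar> powr (2 * (s/2))" by (rule powr_powr)
      finally show ?thesis by simp
    qed
    also have "(\<mu> powr (-2/s)) powr (s/2) = \<mu> powr (-1)"
      using s by (simp add: powr_powr)
    finally show ?thesis using mu by (simp add: powr_minus divide_simps)
  qed
  moreover have "b powr (s/(s-2)) = \<mu> powr (2/(s-2))"
    unfolding b_def using s by (simp add: powr_powr)
  moreover have "a powr (s/2) / (s/2) = (2/s) * a powr (s/2)" by simp
  moreover have "b powr (s/(s-2)) / (s/(s-2)) = (1-2/s) * b powr (s/(s-2))"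
    using s by (simp add: field_simps)
  ultimately show ?thesis using Y ab by metis
qed



lemma young_opt:
  fixes s m Q :: real
  assumes s: "s > 2" and m: "m > 0" and Q: "Q > 0"
  defines "\<mu> \<equiv> (m/Q) powr (1 - 2/s)"
  shows "(2/s) * (m/\<mu>) + (1 - 2/s) * \<mu> powr (2/(s-2)) * Q = m powr (2/s) * Q powr (1 - 2/s)"
proof -
  have e1: "m/\<mu> = m powr (2/s) * Q powr (1 - 2/s)"
  proof -
    have "m/\<mu> = m powr 1 * (m powr (1-2/s) / Q powr (1-2/s)) powr (-1)"
      unfolding \<mu>_def using m Q by (simp add: powr_divide powr_minus divide_simps)
    also have "\<dots> = m powr 1 * m powr (-(1-2/s)) * Q powr (1-2/s)"
      using m Q by (simp add: powr_minus divide_simps powr_divide)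
    also have "\<dots> = m powr (1 + (-(1-2/s))) * Q powr (1-2/s)"
      by (simp only: powr_add)
    also have "1 + (-(1-2/s)) = 2/s" by simp
    finally show ?thesis .
  qed
  have e2: "\<mu> powr (2/(s-2)) * Q = m powr (2/s) * Q powr (1 - 2/s)"
  proof -
    have ex: "(1 - 2/s) * (2/(s-2)) = 2/s" using s by (simp add: field_simps)
    have "\<mu> powr (2/(s-2)) = (m/Q) powr (2/s)"
      unfolding \<mu>_def powr_powr ex ..
    also have "\<dots> = m powr (2/s) * Q powr (-(2/s))"
      using m Q by (simp add: powr_divide powr_minus divide_simps)
    finally have "\<mu> powr (2/(s-2)) * Q = m powr (2/s) * (Q powr (-(2/s)) * Q powr 1)"
      using Q by simp
    also have "Q powr (-(2/s)) * Q powr 1 = Q powr (-(2/s) + 1)"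
      by (simp only: powr_add)
    also have "-(2/s) + 1 = 1 - 2/s" by simp
    finally show ?thesis .
  qed
  show ?thesis unfolding mult.assoc e2 e1
    by (simp add: algebra_simps)
qed



lemma main_bound:
  fixes s t :: real and p :: "real \<Rightarrow> real"
  assumes s: "s > 2" and t: "0 < t" "t \<le> 1/2"
    and p0: "\<And>x. 0 \<le> p x" and pm[measurable]: "p \<in> borel_measurable borel"
    and pint: "integrable lborel p" and p1: "(LINT x|lborel. p x) = 1"
    and p2i: "integrable lborel (\<lambda>x. x\<^sup>2 * p x)" and p2: "(LINT x|lborel. x\<^sup>2 * p x) = 1"
    and psi: "integrable lborel (\<lambda>x. \<bar>x\<bar> powr s * p x)"
    and close: "\<And>x. \<bar>p x - std_normal_density x\<bar> \<le> t"
  shows "D_gauss p \<le> 36 * (LINT x|lborel. \<bar>x\<bar> powr s * p x) powr (2/s)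
                          * (sqrt \<bar>ln t\<bar> * t) powr (1 - 2/s)"
proof -
  define m where "m = (LINT x|lborel. \<bar>x\<bar> powr s * p x)"
  define a where "a = 1 - 2/s"
  define L where "L = - ln t"
  define R where "R = sqrt (2 * L)"
  define K where "K = t * R"
  define c0 where "c0 = ln (sqrt (2 * pi))"
  have a01: "0 < a" "a < 1" unfolding a_def using s by auto
  have ln2: "1/2 \<le> ln (2::real)"
  proof -
    have "ln (exp (1/2)) \<le> ln (2::real)" using exp_half_le2 by (subst ln_le_cancel_iff) auto
    then show ?thesis by simp
  qed
  have "ln t \<le> ln (1/2)" using t by simp
  then have L2: "1/2 \<le> L" unfolding L_def using ln2 by (simp add: ln_div)
  have R2: "R\<^sup>2 = 2 * L" unfolding R_def using L2 by simp
  have R1: "1 \<le> R" unfolding R_def using L2 by simp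
  have expL: "exp L = 1 / t" unfolding L_def using t by (simp add: exp_minus inverse_eq_divide)
  have tL: "t = exp (- L)" unfolding L_def using t by simp
  have K0: "0 < K" unfolding K_def using t R1 by simp
  have K1: "K \<le> 1"
  proof -
    have "ln (1/t) \<le> 1/t - 1" using t by (intro ln_le_minus_one) simp
    then have "L \<le> 1/t - 1" unfolding L_def using t by (simp add: ln_div)
    then have "t * L \<le> 1 - t" using t by (simp add: field_simps)
    then have "t * (t * L) \<le> t * (1 - t)" using t by (intro mult_left_mono) auto
    moreover have "K\<^sup>2 = 2 * (t * (t * L))" unfolding K_def power_mult_distrib R2
      by (simp add: power2_eq_square)
    moreover have "t * (1 - t) \<le> 1/2" 
    proof -
      have "0 \<le> t * t" by simp
      moreover have "t * (1 - t) = t - t * t" by (simp add: algebra_simps)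
      ultimately show ?thesis using t by linarith
    qed
    ultimately have "K\<^sup>2 \<le> 1" by linarith
    then show ?thesis using K0 abs_square_le_1[of K] by simp
  qed
  have sqrtL: "sqrt \<bar>ln t\<bar> = sqrt L" unfolding L_def using t by simp
  have Keq: "K = sqrt 2 * (sqrt \<bar>ln t\<bar> * t)"
    unfolding K_def R_def sqrtL by (simp add: real_sqrt_mult)
  have pi3: "sqrt (2 * pi) \<le> 3"
  proof -
    have "sqrt (2 * pi) \<le> sqrt 9" using pi_less_4 by (intro real_sqrt_le_mono) simp
    also have "sqrt 9 = (3::real)" by (simp add: real_sqrt_unique)
    finally show ?thesis .
  qed
  have pi1: "1 \<le> sqrt (2 * pi)" using pi_gt3 by simp
  have c0: "0 \<le> c0" "c0 \<le> 2"
  proof -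
    show "0 \<le> c0" unfolding c0_def using pi1 by simp
    have "c0 \<le> sqrt (2 * pi) - 1" unfolding c0_def using pi1 by (intro ln_le_minus_one) simp
    then show "c0 \<le> 2" using pi3 by simp
  qed

  have phipos: "\<And>x. 0 < std_normal_density x" by (simp add: normal_density_pos)
  have pi2: "2 \<le> sqrt (2 * pi)"
  proof -
    have "sqrt 4 \<le> sqrt (2 * pi)" using pi_gt3 by (intro real_sqrt_le_mono) simp
    moreover have "sqrt 4 = (2::real)" by (simp add: real_sqrt_unique)
    ultimately show ?thesis by simp
  qed
  have phile: "\<And>x. std_normal_density x \<le> 1/2"
  proof -
    fix x :: real
    have "exp (- x\<^sup>2 / 2) \<le> 1" by simp
    then have "std_normal_density x \<le> 1 / sqrt (2 * pi)"
      unfolding std_normal_density_def using pi1 by (simp add: divide_simps)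
    also have "\<dots> \<le> 1/2" using pi2 by (simp add: divide_simps)
    finally show "std_normal_density x \<le> 1/2" .
  qed
  have ple1: "\<And>x. p x \<le> 1" using close phile t
    by (metis abs_le_D1 add.commute diff_le_eq dual_order.trans field_sum_of_halves add_mono)
  define g where "g x = p x * ln (p x / std_normal_density x)" for x
  have Dg: "D_gauss p = (LINT x|lborel. g x)" by (simp add: D_gauss_def g_def)
  have m0: "0 \<le> m" unfolding m_def using p0 by (intro integral_nonneg_AE) auto
  show ?thesis
  proof (cases "integrable lborel g")
    case False
    then have "D_gauss p = 0" unfolding Dg by (rule not_integrable_integral_eq)
    then show ?thesis by simp
  next
    case gi: True
    define A where "A = {-R..R}"
    define S where "S = {x::real. R < \<bar>x\<bar>}"
    have A_meas[measurable]: "A \<in> sets borel" unfolding A_def by simp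
    have S_meas[measurable]: "S \<in> sets borel" unfolding S_def by measurable
    have S_lb: "S \<in> sets lborel" using S_meas by simp
    have indS: "\<And>x. indicator S x = 1 - (indicator A x :: real)"
      by (auto simp: indicator_def S_def A_def)
    have iA: "integrable lborel (indicator A :: real \<Rightarrow> real)"
      unfolding A_def by (simp add: integrable_indicator_iff emeasure_lborel_Icc_eq)
    have intA: "(LINT x|lborel. indicator A x) = 2 * R"
      unfolding A_def using R1 by (simp add: measure_lborel_Icc)
    have iphi: "integrable lborel std_normal_density" by simp
    have intphi: "(LINT x|lborel. std_normal_density x) = 1" by simp
    have iS2: "integrable lborel (\<lambda>x. indicator S x * (x\<^sup>2 * p x))"
      using integrable_mult_indicator[OF S_lb p2i] by simp
    have iSp: "integrable lborel (\<lambda>x. indicator S x * p x)"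
      using integrable_mult_indicator[OF S_lb pint] by simp
    have iSphi: "integrable lborel (\<lambda>x. indicator S x * std_normal_density x)"
      using integrable_mult_indicator[OF S_lb iphi] by simp
    define T where "T = (LINT x|lborel. indicator S x * (x\<^sup>2 * p x))"
    define PX where "PX = (LINT x|lborel. indicator S x * p x)"
    define PZ where "PZ = (LINT x|lborel. indicator S x * std_normal_density x)"
    have PZ: "PZ \<le> 2 * K"
    proof -
      have pt: "indicator S x * std_normal_density x \<le> (exp (1/2) * t * R) * normal_density 0 R x" for x
      proof (cases "x \<in> S")
        case False then show ?thesis using t R1 by simp
      next
        case True
        then have xR: "R < \<bar>x\<bar>" unfolding S_def by simp
        have "R\<^sup>2 \<le> \<bar>x\<bar>\<^sup>2" using xR R1 by (intro power_mono) auto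
        then have xR2: "R\<^sup>2 \<le> x\<^sup>2" by simp
        have "(R\<^sup>2 - 1) * (x\<^sup>2 - R\<^sup>2) \<ge> 0" using xR2 R1
          by (intro mult_nonneg_nonneg) (auto simp: one_le_power)
        then have ex: "- x\<^sup>2 / 2 \<le> 1/2 - L - x\<^sup>2 / (2 * R\<^sup>2)"
          using R1 R2 L2 by (simp add: field_simps)
        have "std_normal_density x = exp (- x\<^sup>2 / 2) / sqrt (2 * pi)"
          by (simp add: std_normal_density_def)
        also have "\<dots> \<le> exp (1/2 - L - x\<^sup>2 / (2 * R\<^sup>2)) / sqrt (2 * pi)"
          using ex pi1 by (intro divide_right_mono) auto
        also have "exp (1/2 - L - x\<^sup>2 / (2 * R\<^sup>2)) = exp (1/2) * t * exp (- x\<^sup>2 / (2 * R\<^sup>2))"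
          unfolding tL by (simp add: exp_add[symmetric] exp_diff)
        also have "exp (1/2) * t * exp (- x\<^sup>2 / (2 * R\<^sup>2)) / sqrt (2 * pi)
            = (exp (1/2) * t * R) * normal_density 0 R x"
          unfolding normal_density_def using R1 by (simp add: real_sqrt_mult field_simps)
        finally show ?thesis using True by simp
      qed
      have "PZ \<le> (LINT x|lborel. (exp (1/2) * t * R) * normal_density 0 R x)"
        unfolding PZ_def by (intro integral_mono iSphi pt) (use R1 in simp)
      also have "\<dots> = exp (1/2) * t * R" using R1 by simp
      also have "\<dots> \<le> 2 * K" unfolding K_def using exp_half_le2 t R1
        mult_right_mono[OF exp_half_le2, of "t * R"] by (simp add: mult.assoc)
      finally show ?thesis .
    qed
    have PX: "PX \<le> PZ + 2 * K"
    proof -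
      have pt: "indicator S x * p x \<le> (p x - std_normal_density x) + indicator S x * std_normal_density x + t * indicator A x" for x
        using close[of x] by (cases "x \<in> A") (auto simp: indS algebra_simps)
      have "PX \<le> (LINT x|lborel. (p x - std_normal_density x) + indicator S x * std_normal_density x + t * indicator A x)"
        unfolding PX_def by (intro integral_mono iSp pt Bochner_Integration.integrable_add
            Bochner_Integration.integrable_diff pint iphi iSphi integrable_mult_right iA)
      also have "\<dots> = PZ + t * (2 * R)" unfolding PZ_def
        using pint p1 iphi iSphi iA intA
        by (simp add: Bochner_Integration.integral_add Bochner_Integration.integral_diff)
      finally show ?thesis unfolding K_def by simp
    qed
    have PX4: "PX \<le> 4 * K" using PX PZ by simp
    have PX0: "0 \<le> PX" unfolding PX_def using p0 by (intro integral_nonneg_AE) auto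
    have m1: "1 \<le> m"
    proof -
      have pt: "x\<^sup>2 * p x \<le> (2/s) * (\<bar>x\<bar> powr s * p x) + a * p x" for x
      proof -
        have "x\<^sup>2 \<le> (2/s) * (\<bar>x\<bar> powr s / 1) + (1 - 2/s) * 1 powr (2/(s-2))"
          by (rule young_pt) (use s in auto)
        then have "x\<^sup>2 * p x \<le> ((2/s) * \<bar>x\<bar> powr s + a) * p x"
          unfolding a_def using p0[of x] by (intro mult_right_mono) auto
        then show ?thesis by (simp add: algebra_simps)
      qed
      have "1 \<le> (LINT x|lborel. (2/s) * (\<bar>x\<bar> powr s * p x) + a * p x)"
        unfolding p2[symmetric] by (intro integral_mono p2i pt Bochner_Integration.integrable_add integrable_mult_right psi pint)
      also have "\<dots> = (2/s) * m + a" unfolding m_def using psi pint p1 by simp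
      finally show ?thesis unfolding a_def using s by (simp add: field_simps)
    qed
    have Tmu: "T \<le> (2/s) * (m/\<mu>) + a * \<mu> powr (2/(s-2)) * PX" if mu: "\<mu> > 0" for \<mu>
    proof -
      have pt: "indicator S x * (x\<^sup>2 * p x) \<le> ((2/s)/\<mu>) * (\<bar>x\<bar> powr s * p x) + (a * \<mu> powr (2/(s-2))) * (indicator S x * p x)" for x
      proof -
        have y: "x\<^sup>2 \<le> (2/s) * (\<bar>x\<bar> powr s / \<mu>) + a * \<mu> powr (2/(s-2))"
          unfolding a_def by (rule young_pt) (use s mu in auto)
        show ?thesis
        proof (cases "x \<in> S")
          case True
          have "x\<^sup>2 * p x \<le> ((2/s) * (\<bar>x\<bar> powr s / \<mu>) + a * \<mu> powr (2/(s-2))) * p x"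
            using y p0[of x] by (intro mult_right_mono) auto
          then show ?thesis using True by (simp add: algebra_simps)
        next
          case False
          then show ?thesis using p0[of x] s mu a01 by simp
        qed
      qed
      have "T \<le> (LINT x|lborel. ((2/s)/\<mu>) * (\<bar>x\<bar> powr s * p x) + (a * \<mu> powr (2/(s-2))) * (indicator S x * p x))"
        unfolding T_def by (intro integral_mono iS2 pt Bochner_Integration.integrable_add integrable_mult_right psi iSp)
      also have "\<dots> = (2/s) * (m/\<mu>) + a * \<mu> powr (2/(s-2)) * PX"
        unfolding m_def PX_def using psi iSp by simp
      finally show ?thesis .
    qed
    define Q where "Q = 4 * K"
    have Q0: "Q > 0" unfolding Q_def using K0 by simp
    define \<mu> where "\<mu> = (m/Q) powr (1 - 2/s)"
    have mu0: "\<mu> > 0" unfolding \<mu>_def using m1 Q0 by simp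
    have T: "T \<le> m powr (2/s) * Q powr a"
    proof -
      have "T \<le> (2/s) * (m/\<mu>) + a * \<mu> powr (2/(s-2)) * PX" by (rule Tmu[OF mu0])
      also have "\<dots> \<le> (2/s) * (m/\<mu>) + a * \<mu> powr (2/(s-2)) * Q"
        using PX4 a01 unfolding Q_def by (intro add_left_mono mult_left_mono) auto
      also have "\<dots> = m powr (2/s) * Q powr a"
        unfolding \<mu>_def a_def by (rule young_opt) (use s m1 Q0 in auto)
      finally show ?thesis .
    qed
    define m' where "m' = m powr (2/s)"
    have m'1: "1 \<le> m'" unfolding m'_def using m1 s by (intro ge_one_powr_ge_zero) auto
    have Qa: "Q powr a \<le> 4 * K powr a"
    proof -
      have "Q powr a = 4 powr a * K powr a" unfolding Q_def using K0 by (simp add: powr_mult)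
      moreover have "4 powr a \<le> 4 powr 1" using a01 by (intro powr_mono) auto
      ultimately show ?thesis using K0 by simp
    qed
    have KKa: "K \<le> K powr a"
    proof -
      have "K powr 1 \<le> K powr a" using a01 K0 K1 by (intro powr_mono') auto
      then show ?thesis using K0 by simp
    qed
    define h2 where "h2 x = t * sqrt (2 * pi) * indicator A x + indicator S x * (x\<^sup>2 * p x) / 2
        + c0 * (indicator S x * p x) + indicator S x * std_normal_density x" for x
    have ih2: "integrable lborel h2" unfolding h2_def
      by (intro Bochner_Integration.integrable_add integrable_mult_right integrable_divide iA iS2 iSp iSphi)
    have inth2: "(LINT x|lborel. h2 x) = t * sqrt (2 * pi) * (2 * R) + T / 2 + c0 * PX + PZ"
      unfolding h2_def T_def PX_def PZ_def using iA iS2 iSp iSphi intA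
      by (simp add: Bochner_Integration.integral_add integrable_mult_right integrable_divide)
    have hpt: "g x - p x + std_normal_density x \<le> h2 x" for x
    proof -
      define P where "P = p x"
      define F where "F = std_normal_density x"
      have F0: "0 < F" unfolding F_def by (rule phipos)
      have P0: "0 \<le> P" unfolding P_def by (rule p0)
      have P1: "P \<le> 1" unfolding P_def by (rule ple1)
      have gx: "g x = P * ln (P / F)" unfolding g_def P_def F_def ..
      have lnF: "ln F = - c0 - x\<^sup>2 / 2"
        unfolding F_def std_normal_density_def c0_def using pi1
        by (simp add: ln_mult ln_div)
      show ?thesis
      proof (cases "\<bar>x\<bar> \<le> R")
        case True
        then have xA: "x \<in> A" "x \<notin> S" unfolding A_def S_def by auto
        have h2x: "h2 x = t * sqrt (2 * pi)" unfolding h2_def using xA by simp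
        have st1: "g x - P + F \<le> (P - F)\<^sup>2 / F"
        proof (cases "P = 0")
          case True then show ?thesis using F0 by (simp add: gx power2_eq_square)
        next
          case False
          then have Pp: "P > 0" using P0 by simp
          have "ln (P / F) \<le> P / F - 1" using Pp F0 by (intro ln_le_minus_one) simp
          then have "P * ln (P / F) \<le> P * (P / F - 1)" using Pp by (intro mult_left_mono) auto
          moreover have "P * (P / F - 1) - P + F = (P - F)\<^sup>2 / F" using F0
            by (simp add: field_simps power2_eq_square)
          ultimately show ?thesis unfolding gx by linarith
        qed
        have "(P - F)\<^sup>2 \<le> t\<^sup>2" using close[of x] t unfolding P_def F_def
          by (simp add: abs_le_square_iff[symmetric])
        then have st2: "(P - F)\<^sup>2 / F \<le> t\<^sup>2 / F" using F0 by (intro divide_right_mono) auto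
        have invF: "1 / F = sqrt (2 * pi) * exp (x\<^sup>2 / 2)"
          unfolding F_def std_normal_density_def using pi1 by (simp add: exp_minus field_simps)
        have "\<bar>x\<bar>\<^sup>2 \<le> R\<^sup>2" using True by (intro power_mono) auto
        then have "x\<^sup>2 / 2 \<le> L" using R2 by simp
        then have "exp (x\<^sup>2 / 2) \<le> 1 / t" using expL by (metis exp_le_cancel_iff)
        then have "t\<^sup>2 * (sqrt (2 * pi) * exp (x\<^sup>2 / 2)) \<le> t\<^sup>2 * (sqrt (2 * pi) * (1 / t))"
          using pi1 by (intro mult_left_mono) auto
        also have "\<dots> = t * sqrt (2 * pi)" using t by (simp add: power2_eq_square)
        finally have st3': "t\<^sup>2 * (1 / F) \<le> t * sqrt (2 * pi)" unfolding invF .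
        have "t\<^sup>2 / F = t\<^sup>2 * (1 / F)" by simp
        then have st3: "t\<^sup>2 / F \<le> t * sqrt (2 * pi)" using st3' by simp
        show ?thesis using st1 st2 st3 h2x unfolding P_def F_def by linarith
      next
        case False
        then have xS: "x \<notin> A" "x \<in> S" unfolding A_def S_def by auto
        have h2x: "h2 x = x\<^sup>2 * P / 2 + c0 * P + F" unfolding h2_def P_def F_def using xS by simp
        have "g x \<le> P * (c0 + x\<^sup>2 / 2)"
        proof (cases "P = 0")
          case True then show ?thesis by (simp add: gx)
        next
          case False
          then have Pp: "P > 0" using P0 by simp
          have "ln P \<le> 0" using Pp P1 by simp
          then have "ln (P / F) \<le> c0 + x\<^sup>2 / 2" using Pp F0 lnF by (simp add: ln_div)
          then show ?thesis unfolding gx using Pp by (intro mult_left_mono) auto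
        qed
        then show ?thesis using h2x P0 unfolding P_def F_def by (simp add: algebra_simps)
      qed
    qed
    have "D_gauss p = (LINT x|lborel. g x - p x + std_normal_density x)"
      unfolding Dg using gi pint p1 iphi
      by (simp add: Bochner_Integration.integral_add Bochner_Integration.integral_diff)
    also have "\<dots> \<le> (LINT x|lborel. h2 x)"
      by (intro integral_mono ih2 hpt Bochner_Integration.integrable_add Bochner_Integration.integrable_diff gi pint iphi)
    also have "\<dots> = t * sqrt (2 * pi) * (2 * R) + T / 2 + c0 * PX + PZ" by (rule inth2)
    also have "\<dots> \<le> 6 * K + 2 * m' * K powr a + 8 * K + 2 * K"
    proof -
      have "t * sqrt (2 * pi) * (2 * R) \<le> 6 * K" unfolding K_def using pi3 t R1
        by (simp add: mult.commute mult.left_commute mult_left_mono)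
      moreover have "T / 2 \<le> 2 * m' * K powr a"
      proof -
        have "m' * Q powr a \<le> m' * (4 * K powr a)" using Qa m'1 by (intro mult_left_mono) auto
        then have "T \<le> 4 * (m' * K powr a)" using T unfolding m'_def by (simp add: algebra_simps)
        then show ?thesis by (simp add: algebra_simps)
      qed
      moreover have "c0 * PX \<le> 8 * K"
      proof -
        have "c0 * PX \<le> 2 * PX" using c0 PX0 by (intro mult_right_mono) auto
        then show ?thesis using PX4 by linarith
      qed
      ultimately show ?thesis using PZ by linarith
    qed
    also have "\<dots> \<le> 18 * m' * K powr a"
    proof -
      have "1 * K powr a \<le> m' * K powr a" using m'1 by (intro mult_right_mono) auto
      then have "K powr a \<le> m' * K powr a" by simp
      then have "K \<le> m' * K powr a" using KKa by linarith
      then show ?thesis by (simp add: algebra_simps)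
    qed
    also have "K powr a \<le> 2 * (sqrt \<bar>ln t\<bar> * t) powr a"
    proof -
      have "K powr a = sqrt 2 powr a * (sqrt \<bar>ln t\<bar> * t) powr a" unfolding Keq
        using t by (simp add: powr_mult)
      moreover have "sqrt 2 powr a \<le> sqrt 2 powr 1" using a01 by (intro powr_mono) auto
      moreover have "sqrt 2 \<le> (2::real)"
      proof -
        have "sqrt 2 \<le> sqrt (4::real)" by (rule real_sqrt_le_mono) simp
        moreover have "sqrt 4 = (2::real)" by (simp add: real_sqrt_unique)
        ultimately show ?thesis by simp
      qed
      ultimately have "sqrt 2 powr a \<le> 2" by simp
      then have "sqrt 2 powr a * (sqrt \<bar>ln t\<bar> * t) powr a \<le> 2 * (sqrt \<bar>ln t\<bar> * t) powr a"
        by (intro mult_right_mono) auto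
      then show ?thesis using \<open>K powr a = _\<close> by simp
    qed
    then have "18 * m' * K powr a \<le> 18 * m' * (2 * (sqrt \<bar>ln t\<bar> * t) powr a)"
      using m'1 by (intro mult_left_mono) auto
    finally show ?thesis unfolding m'_def m_def a_def by simp
  qed
qed



lemma M_bdd:
  fixes \<epsilon> :: real assumes e: "\<epsilon> > 0"
  shows "bdd_above ((\<lambda>x. x powr \<epsilon> * sqrt \<bar>ln x\<bar>) ` {0..1})"
proof (rule bdd_aboveI2)
  fix x :: real assume x: "x \<in> {0..1}"
  show "x powr \<epsilon> * sqrt \<bar>ln x\<bar> \<le> 1 + 1/\<epsilon>"
  proof (cases "x = 0")
    case True then show ?thesis using e by simp
  next
    case False
    then have x0: "0 < x" "x \<le> 1" using x by auto
    define u where "u = x powr \<epsilon>"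
    have u0: "0 < u" "u \<le> 1" unfolding u_def using x0 e by (auto intro: powr_le1)
    have lnu: "ln u = \<epsilon> * ln x" unfolding u_def using x0 by (simp add: ln_powr)
    have "ln (1/u) \<le> 1/u - 1" using u0 by (intro ln_le_minus_one) simp
    then have "- ln u \<le> 1/u" using u0 by (simp add: ln_div)
    then have "- ln x \<le> 1 / (u * \<epsilon>)" using lnu e u0 by (simp add: field_simps)
    moreover have "ln x \<le> 0" using x0 by simp
    ultimately have absx: "\<bar>ln x\<bar> \<le> 1 / (u * \<epsilon>)" by simp
    define v where "v = u * sqrt \<bar>ln x\<bar>"
    have v0: "0 \<le> v" unfolding v_def using u0 by simp
    have "v\<^sup>2 = u\<^sup>2 * \<bar>ln x\<bar>" unfolding v_def by (simp add: power_mult_distrib)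
    also have "\<dots> \<le> u\<^sup>2 * (1 / (u * \<epsilon>))" using absx by (intro mult_left_mono) auto
    also have "\<dots> = u / \<epsilon>" using u0 by (simp add: power2_eq_square field_simps)
    also have "\<dots> \<le> 1 / \<epsilon>" using u0 e by (simp add: divide_right_mono)
    finally have v2: "v\<^sup>2 \<le> 1/\<epsilon>" .
    have "v \<le> 1 + 1/\<epsilon>"
    proof (cases "v \<le> 1")
      case True
      have "0 < 1/\<epsilon>" using e by simp
      then show ?thesis using True by linarith
    next
      case False
      then have "v \<le> v\<^sup>2" by (simp add: power2_eq_square)
      then show ?thesis using v2 by simp
    qed
    then show ?thesis unfolding v_def u_def .
  qed
qed

theorem corollary2p6:
  fixes s :: real
  assumes "s > 2"
  shows "\<exists>C1>0. \<forall>p :: real \<Rightarrow> real.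
     ((\<forall>x. 0 \<le> p x) \<and> p \<in> borel_measurable borel \<and>
      integrable lborel p \<and> (LINT x|lborel. p x) = 1 \<and>
      integrable lborel (\<lambda>x. x * p x) \<and> (LINT x|lborel. x * p x) = 0 \<and>
      integrable lborel (\<lambda>x. x\<^sup>2 * p x) \<and> (LINT x|lborel. x\<^sup>2 * p x) = 1 \<and>
      integrable lborel (\<lambda>x. \<bar>x\<bar> powr s * p x) \<and>
      (\<forall>x. \<bar>p x - std_normal_density x\<bar> \<le> 1/2))
     \<longrightarrow> (\<forall>\<epsilon>>0.
       (let m = (LINT x|lborel. \<bar>x\<bar> powr s * p x);
            t = sup_norm (\<lambda>x. p x - std_normal_density x)
        in D_gauss p \<le> C1 * m powr (2/s) * (sqrt \<bar>ln t\<bar> * t) powr (1 - 2/s)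
         \<and> C1 * m powr (2/s) * (sqrt \<bar>ln t\<bar> * t) powr (1 - 2/s)
             \<le> C1 * M_eps \<epsilon> * m powr (2/s) * t powr ((1 - 2/s) * (1 - \<epsilon>))))"
proof (intro exI[of _ 36] conjI allI impI)
  fix p :: "real \<Rightarrow> real" and \<epsilon> :: real
  assume H: "(\<forall>x. 0 \<le> p x) \<and> p \<in> borel_measurable borel \<and>
      integrable lborel p \<and> (LINT x|lborel. p x) = 1 \<and>
      integrable lborel (\<lambda>x. x * p x) \<and> (LINT x|lborel. x * p x) = 0 \<and>
      integrable lborel (\<lambda>x. x\<^sup>2 * p x) \<and> (LINT x|lborel. x\<^sup>2 * p x) = 1 \<and>
      integrable lborel (\<lambda>x. \<bar>x\<bar> powr s * p x) \<and>
      (\<forall>x. \<bar>p x - std_normal_density x\<bar> \<le> 1/2)"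
  assume e: "\<epsilon> > 0"
  define m where "m = (LINT x|lborel. \<bar>x\<bar> powr s * p x)"
  define t where "t = sup_norm (\<lambda>x. p x - std_normal_density x)"
  define a where "a = 1 - 2/s"
  have a01: "0 < a" "a < 1" unfolding a_def using assms by auto
  have close2: "\<And>x. \<bar>p x - std_normal_density x\<bar> \<le> 1/2" using H by blast
  have bdd: "bdd_above (range (\<lambda>x. \<bar>p x - std_normal_density x\<bar>))"
    using close2 by (intro bdd_aboveI2[where M="1/2"]) auto
  have close: "\<And>x. \<bar>p x - std_normal_density x\<bar> \<le> t"
    unfolding t_def sup_norm_def by (rule cSUP_upper[OF UNIV_I bdd])
  have t2: "t \<le> 1/2" unfolding t_def sup_norm_def by (rule cSUP_least) (use close2 in auto)
  have t0: "0 \<le> t" using close[of 0] by linarith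
  have m0: "0 \<le> m" unfolding m_def using H by (intro integral_nonneg_AE) auto
  have ineq1: "D_gauss p \<le> 36 * m powr (2/s) * (sqrt \<bar>ln t\<bar> * t) powr a"
  proof (cases "t = 0")
    case True
    then have "\<And>x. p x = std_normal_density x" using close by (metis abs_le_zero_iff eq_iff_diff_eq_0)
    then have "D_gauss p = 0" unfolding D_gauss_def by (simp add: normal_density_pos less_imp_neq[symmetric])
    then show ?thesis using True by simp
  next
    case False
    then have "0 < t" using t0 by simp
    then show ?thesis unfolding m_def a_def
      by (intro main_bound) (use assms t2 close H in auto)
  qed
  have ineq2: "36 * m powr (2/s) * (sqrt \<bar>ln t\<bar> * t) powr a
      \<le> 36 * M_eps \<epsilon> * m powr (2/s) * t powr (a * (1 - \<epsilon>))"
  proof (cases "t = 0")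
    case True then show ?thesis by simp
  next
    case False
    then have tp: "0 < t" using t0 by simp
    define v where "v = t powr \<epsilon> * sqrt \<bar>ln t\<bar>"
    have v0: "0 \<le> v" unfolding v_def by simp
    have vM: "v \<le> M_eps \<epsilon> - 1" unfolding v_def M_eps_def
      by (simp, rule cSUP_upper[OF _ M_bdd[OF e]]) (use tp t2 in auto)
    have va: "v powr a \<le> M_eps \<epsilon>"
    proof (cases "v \<le> 1")
      case True
      then have "v powr a \<le> 1" using v0 a01 by (intro powr_le1) auto
      moreover have "1 \<le> M_eps \<epsilon>" using vM v0 by simp
      ultimately show ?thesis by linarith
    next
      case False
      then have "v powr a \<le> v powr 1" using a01 by (intro powr_mono) auto
      then show ?thesis using vM False by simp
    qed
    have "sqrt \<bar>ln t\<bar> * t = v * t powr (1 - \<epsilon>)"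
    proof -
      have "v * t powr (1 - \<epsilon>) = sqrt \<bar>ln t\<bar> * (t powr \<epsilon> * t powr (1 - \<epsilon>))"
        unfolding v_def by (simp add: algebra_simps)
      also have "t powr \<epsilon> * t powr (1 - \<epsilon>) = t powr (\<epsilon> + (1 - \<epsilon>))" by (simp only: powr_add)
      finally show ?thesis using tp by simp
    qed
    then have "(sqrt \<bar>ln t\<bar> * t) powr a = v powr a * t powr (a * (1 - \<epsilon>))"
      using v0 tp by (simp add: powr_mult powr_powr mult.commute)
    also have "\<dots> \<le> M_eps \<epsilon> * t powr (a * (1 - \<epsilon>))"
      using va by (intro mult_right_mono) auto
    finally have "(sqrt \<bar>ln t\<bar> * t) powr a \<le> M_eps \<epsilon> * t powr (a * (1 - \<epsilon>))" .
    then have "(36 * m powr (2/s)) * (sqrt \<bar>ln t\<bar> * t) powr a \<le> (36 * m powr (2/s)) * (M_eps \<epsilon> * t powr (a * (1 - \<epsilon>)))"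
      by (intro mult_left_mono) auto
    then show ?thesis by (simp add: algebra_simps)
  qed
  show "let m = (LINT x|lborel. \<bar>x\<bar> powr s * p x);
            t = sup_norm (\<lambda>x. p x - std_normal_density x)
        in D_gauss p \<le> 36 * m powr (2/s) * (sqrt \<bar>ln t\<bar> * t) powr (1 - 2/s)
         \<and> 36 * m powr (2/s) * (sqrt \<bar>ln t\<bar> * t) powr (1 - 2/s)
             \<le> 36 * M_eps \<epsilon> * m powr (2/s) * t powr ((1 - 2/s) * (1 - \<epsilon>))"
    using ineq1 ineq2 unfolding Let_def m_def[symmetric] t_def[symmetric] a_def by simp
qed (simp)

end
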